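(* Let $(X_1,Y_1,Y'_1),\ldots,(X_n,Y_n,Y'_n)$ be a sequence of independent triples of Bernoulli random variables (triples mutually independent; variables within a triple may be dependent) such that $\mathbb{E}[X_i]=p_i$, $\mathbb{E}[Y_i]=q_i$, $\mathbb{E}[Y'_i]=q'_i$ and $\mathbb{E}[X_iY_i]=0$ (i.e., $X_i$ and $Y_i$ are never both $1$). Suppose further that for each $i$ either (a) $q'_i=0$, or (b) $q_i=1-p_i$, and $X_i=\mathbf{1}(\theta_i<p_i)$ and $Y'_i=\mathbf{1}(\theta_i<q'_i)$ for a threshold $\theta_i$ chosen uniformly in $[0,1]$. Let $X=\sum_i X_i$, $Y=\sum_i(Y_i+Y'_i)$, $\mu_x=\mathbb{E}[X]$, $\mu_y=\mathbb{E}[Y]$. If $\mu_x+\mu_y>1$, then $$\frac{\mu_x-1}{\mu_x+\mu_y-1}\le\mathbb{E}\Big[\frac{X}{X+Y}\Big]\le\frac{\mu_x}{\mu_x+\mu_y-1}.$$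
   Context: Convention: in the expression $\frac{X}{X+Y}$, the value $0/0$ is interpreted as $1$ for the left inequality and as $0$ for the right inequality. $\mathbf{1}(\cdot)$ denotes the indicator of an event. *)

theory Defs
  imports "HOL-Probability.Probability"
begin

end

theory Submission
  imports Defs
begin

lemma alg_Lb: fixes L a b s :: real
  assumes L: "L > 0" and K: "L * (s*b + (1-s)*a) \<le> 1" and ba: "b \<le> a" and s: "0 \<le> s" "s \<le> 1"
  shows "L * b \<le> 1"
proof -
  have "L * b = L * (s*b + (1-s)*b)" by (simp add: algebra_simps)
  also have "\<dots> \<le> L * (s*b + (1-s)*a)"
    using L ba s by (intro mult_left_mono add_left_mono mult_left_mono) auto
  finally show ?thesis using K by linarith
qed

lemma alg_A: fixes L a m p :: real
  assumes L: "L > 0" "L \<le> m" and K: "(m + 0) * (0*b + (1-0)*a) \<le> 1" and a: "0 \<le> a" and p: "0 \<le> p"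
  shows "0 * b + p * a \<le> p / L"
proof -
  have "L * a \<le> m * a" using L a by (intro mult_right_mono) auto
  then have "L * a \<le> 1" using K by simp
  then have "a \<le> 1 / L" using L by (simp add: field_simps)
  then have "p * a \<le> p * (1 / L)" using p by (intro mult_left_mono)
  then show ?thesis by simp
qed

lemma alg_B1: fixes L a b s p :: real
  assumes L: "L > 0" and K: "L * (s*b + (1-s)*a) \<le> 1" and ba: "b \<le> a" and b: "0 \<le> b"
    and s: "0 \<le> s" "s \<le> 1" and p: "0 \<le> p" "p \<le> s"
  shows "p * b + 0 * a \<le> p / L" "(2* s - p) * b + (1 - s) * a \<le> (1 - p + s) / L"
proof -
  have Lb: "L * b \<le> 1" by (rule alg_Lb[OF L K ba s])
  have "L * (p * b) \<le> p" using Lb p by (metis mult.left_commute mult_left_mono mult.right_neutral)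
  then show "p * b + 0 * a \<le> p / L" using L by (simp add: field_simps)
  have "L * ((2* s - p) * b + (1 - s) * a) = L * (s*b + (1-s)*a) + (s - p) * (L * b)"
    by (simp add: algebra_simps)
  also have "\<dots> \<le> 1 + (s - p) * 1" using K Lb p by (intro add_mono mult_left_mono) auto
  finally show "(2* s - p) * b + (1 - s) * a \<le> (1 - p + s) / L" using L by (simp add: field_simps)
qed

lemma alg_B2: fixes L a b s p :: real
  assumes L: "L > 0" and K: "L * (s*b + (1-s)*a) \<le> 1" and ba: "b \<le> a" and b: "0 \<le> b"
    and s: "0 \<le> s" "s \<le> p" and p: "p \<le> 1"
  shows "s * b + (p - s) * a \<le> p / L" "s * b + (1 - p) * a \<le> (1 - p + s) / L"
proof -
  have Lb: "L * b \<le> 1" by (rule alg_Lb[OF L K ba]) (use s p in auto)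
  show "s * b + (p - s) * a \<le> p / L"
  proof (cases "s = 1")
    case True
    then have "p = 1" using s p by auto
    then show ?thesis using True Lb L by (simp add: field_simps)
  next
    case False
    then have s1: "0 < 1 - s" using s p by auto
    have "(1 - s) * (L * (s * b + (p - s) * a)) = (p - s) * (L * (s*b + (1-s)*a)) + s * (1 - p) * (L * b)"
      by (simp add: algebra_simps)
    also have "\<dots> \<le> (p - s) * 1 + s * (1 - p) * 1"
      using K Lb s p by (intro add_mono mult_left_mono) auto
    also have "\<dots> = (1 - s) * p" by (simp add: algebra_simps)
    finally have "L * (s * b + (p - s) * a) \<le> p" using s1 by simp
    then show ?thesis using L by (simp add: field_simps)
  qed
  show "s * b + (1 - p) * a \<le> (1 - p + s) / L"
  proof (cases "s = 1")
    case True
    then have "p = 1" using s p by auto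
    then show ?thesis using True Lb L by (simp add: field_simps)
  next
    case False
    then have s1: "0 < 1 - s" using s p by auto
    have "(1 - s) * (L * (s * b + (1 - p) * a)) = (1 - p) * (L * (s*b + (1-s)*a)) + s * (p - s) * (L * b)"
      by (simp add: algebra_simps)
    also have "\<dots> \<le> (1 - p) * 1 + s * (p - s) * 1"
      using K Lb s p by (intro add_mono mult_left_mono) auto
    also have "\<dots> = (1 - s) * (1 - p + s)" by (simp add: algebra_simps)
    finally have "L * (s * b + (1 - p) * a) \<le> 1 - p + s" using s1 by simp
    then show ?thesis using L by (simp add: field_simps)
  qed
qed

lemma (in prob_space) bnd_int:
  fixes f :: "'a \<Rightarrow> real"
  assumes "f \<in> borel_measurable M" "\<And>\<omega>. \<omega> \<in> space M \<Longrightarrow> \<bar>f \<omega>\<bar> \<le> B"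
  shows "integrable M f"
  using assms by (intro integrable_const_bound[where B=B]) (auto intro!: AE_I2)

lemma (in prob_space) indep_split:
  fixes Z :: "'i \<Rightarrow> 'a \<Rightarrow> 'b::topological_space" and f u :: "'b \<Rightarrow> real" and g :: "real \<Rightarrow> real"
  assumes ind: "indep_vars (\<lambda>_. borel) Z I" and iI: "i \<in> I" and JI: "J \<subseteq> I" and iJ: "i \<notin> J"
    and f: "f \<in> borel_measurable borel" and u: "u \<in> borel_measurable borel"
    and g: "g \<in> borel_measurable borel"
    and b1: "\<And>\<omega>. \<omega> \<in> space M \<Longrightarrow> \<bar>f (Z i \<omega>)\<bar> \<le> B1"
    and b2: "\<And>\<omega>. \<omega> \<in> space M \<Longrightarrow> \<bar>g (\<Sum>j\<in>J. u (Z j \<omega>))\<bar> \<le> B2"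
  shows "(\<integral>\<omega>. f (Z i \<omega>) * g (\<Sum>j\<in>J. u (Z j \<omega>)) \<partial>M)
       = (\<integral>\<omega>. f (Z i \<omega>) \<partial>M) * (\<integral>\<omega>. g (\<Sum>j\<in>J. u (Z j \<omega>)) \<partial>M)"
proof -
  have c1: "(\<lambda>r. r i) \<in> PiM {i} (\<lambda>_. borel) \<rightarrow>\<^sub>M (borel :: 'b measure)"
    by (rule measurable_component_singleton) simp
  have m1: "(\<lambda>r. f (r i)) \<in> borel_measurable (PiM {i} (\<lambda>_. borel))"
    by (rule measurable_compose[OF c1 f])
  have cj: "(\<lambda>r. u (r j)) \<in> borel_measurable (PiM J (\<lambda>_. borel))" if "j \<in> J" for j
  proof -
    have "(\<lambda>r. r j) \<in> PiM J (\<lambda>_. borel) \<rightarrow>\<^sub>M (borel :: 'b measure)"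
      by (rule measurable_component_singleton) (use that in simp)
    from measurable_compose[OF this u] show ?thesis .
  qed
  have m2: "(\<lambda>r. g (\<Sum>j\<in>J. u (r j))) \<in> borel_measurable (PiM J (\<lambda>_. borel))"
    by (rule measurable_compose[OF borel_measurable_sum g]) (rule cj)
  have "indep_var borel ((\<lambda>r. f (r i)) \<circ> (\<lambda>\<omega>. restrict (\<lambda>j. Z j \<omega>) {i}))
          borel ((\<lambda>r. g (\<Sum>j\<in>J. u (r j))) \<circ> (\<lambda>\<omega>. restrict (\<lambda>j. Z j \<omega>) J))"
    by (rule indep_var_compose[OF indep_var_restrict[OF ind] m1 m2]) (use iI JI iJ in auto)
  also have "((\<lambda>r. f (r i)) \<circ> (\<lambda>\<omega>. restrict (\<lambda>j. Z j \<omega>) {i})) = (\<lambda>\<omega>. f (Z i \<omega>))"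
    by auto
  also have "((\<lambda>r. g (\<Sum>j\<in>J. u (r j))) \<circ> (\<lambda>\<omega>. restrict (\<lambda>j. Z j \<omega>) J))
       = (\<lambda>\<omega>. g (\<Sum>j\<in>J. u (Z j \<omega>)))"
    by (auto simp: fun_eq_iff intro!: arg_cong[where f=g] sum.cong)
  finally have iv: "indep_var borel (\<lambda>\<omega>. f (Z i \<omega>)) borel (\<lambda>\<omega>. g (\<Sum>j\<in>J. u (Z j \<omega>)))" .
  show ?thesis
    apply (rule indep_var_lebesgue_integral[OF iv])
    apply (rule bnd_int[OF indep_var_rv1[OF iv, simplified] b1], assumption)
    apply (rule bnd_int[OF indep_var_rv2[OF iv, simplified] b2], assumption)
    done
qed

definition hh :: "real \<Rightarrow> real \<Rightarrow> real" where
  "hh s r = s / (2 + r) + (1 - s) / (1 + r)"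

lemma hh_anti: "0 \<le> x \<Longrightarrow> x \<le> y \<Longrightarrow> 0 \<le> s \<Longrightarrow> s \<le> 1 \<Longrightarrow> hh s y \<le> hh s x"
  unfolding hh_def
  by (intro add_mono divide_left_mono mult_pos_pos) auto

lemma hh_nonneg: "0 \<le> x \<Longrightarrow> 0 \<le> s \<Longrightarrow> s \<le> 1 \<Longrightarrow> 0 \<le> hh s x"
  unfolding hh_def by auto

lemma hh_le1: "0 \<le> x \<Longrightarrow> 0 \<le> s \<Longrightarrow> s \<le> 1 \<Longrightarrow> hh s x \<le> 1"
  using hh_anti[of 0 x s] by (simp add: hh_def)

lemma hh_key: assumes "0 \<le> r" "r = 0 \<or> 1 \<le> r" "0 \<le> s" "s \<le> 1"
  shows "r * hh s (r - 1) + s * hh s r \<le> 1"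
  using assms(2)
proof
  assume "r = 0"
  moreover have "s * (1 - s / 2) \<le> 1 * 1" using assms by (intro mult_mono) auto
  ultimately show ?thesis using assms by (simp add: hh_def)
next
  assume r1: "1 \<le> r"
  have "r * hh s (r - 1) + s * hh s r = 1 - s^2 * (1/(1+r) - 1/(2+r))"
  proof -
    define A where "A = 1 / (1 + r)"
    define B where "B = 1 / (2 + r)"
    define C where "C = (1 - s) / r"
    have eA: "r * A = 1 - A" using r1 unfolding A_def by (simp add: field_simps)
    have eC: "r * C = 1 - s" using r1 unfolding C_def by (simp add: field_simps)
    have h1: "hh s (r - 1) = s * A + C" unfolding hh_def A_def C_def by (simp add: algebra_simps)
    have h2: "hh s r = s * B + (1 - s) * A" unfolding hh_def A_def B_def by (simp add: algebra_simps)
    have "r * hh s (r - 1) + s * hh s r = s * (r * A) + r * C + s * (s * B + (1 - s) * A)"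
      unfolding h1 h2 by (simp add: algebra_simps)
    also have "\<dots> = 1 - s^2 * (A - B)" unfolding eA eC by (simp add: algebra_simps power2_eq_square)
    finally show ?thesis unfolding A_def B_def .
  qed
  also have "\<dots> \<le> 1"
  proof -
    have "1 / (2 + r) \<le> 1 / (1 + r)" using r1 by (intro divide_left_mono) auto
    then have "0 \<le> s^2 * (1/(1+r) - 1/(2+r))" by simp
    then show ?thesis by simp
  qed
  finally show ?thesis .
qed

lemma hh_meas[measurable]: "hh s \<in> borel_measurable borel"
  unfolding hh_def by measurable


lemma (in prob_space) Klemma:
  fixes V :: "nat \<Rightarrow> 'a \<Rightarrow> real" and c :: "nat \<Rightarrow> real"
  assumes ind: "indep_vars (\<lambda>_. borel) V I" and JI: "J \<subseteq> I" and fin: "finite J"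
   and vals: "\<And>j \<omega>. j \<in> J \<Longrightarrow> \<omega> \<in> space M \<Longrightarrow> V j \<omega> = 0 \<or> (1 \<le> V j \<omega> \<and> V j \<omega> \<le> 3)"
   and cj: "\<And>j. j \<in> J \<Longrightarrow> AE \<omega> in M. c j \<le> V j \<omega> \<and> V j \<omega> \<le> c j + 1"
   and c0: "\<And>j. j \<in> J \<Longrightarrow> 0 \<le> c j"
   and s: "0 \<le> s" "s \<le> 1"
  shows "((\<Sum>j\<in>J. \<integral>\<omega>. V j \<omega> \<partial>M) + s) * (\<integral>\<omega>. hh s (\<Sum>j\<in>J. V j \<omega>) \<partial>M) \<le> 1"
proof -
  have VM: "V j \<in> borel_measurable M" if "j \<in> J" for j
    using ind JI that unfolding indep_vars_def by auto
  define R where "R \<omega> = (\<Sum>j\<in>J. V j \<omega>)" for \<omega>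
  have RM[measurable]: "R \<in> borel_measurable M"
    unfolding R_def by (intro borel_measurable_sum VM)
  have Vnn: "0 \<le> V j \<omega>" if "j \<in> J" "\<omega> \<in> space M" for j \<omega> using vals[OF that] by auto
  have Rp: "0 \<le> R \<omega> \<and> (R \<omega> = 0 \<or> 1 \<le> R \<omega>)" if \<omega>: "\<omega> \<in> space M" for \<omega>
  proof (cases "\<forall>j\<in>J. V j \<omega> = 0")
    case True then show ?thesis unfolding R_def by simp
  next
    case False
    then obtain j where j: "j \<in> J" "V j \<omega> \<noteq> 0" by auto
    then have "1 \<le> V j \<omega>" using vals[OF j(1) \<omega>] by auto
    also have "V j \<omega> \<le> R \<omega>" unfolding R_def
      by (rule member_le_sum) (use j Vnn \<omega> fin in auto)
    finally show ?thesis by simp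
  qed
  have iH: "integrable M (\<lambda>\<omega>. hh s (R \<omega>))"
    by (rule bnd_int[where B=1]) (use Rp s hh_nonneg hh_le1 in auto)
  have iV: "integrable M (V j)" if "j \<in> J" for j
    by (rule bnd_int[where B=3, OF VM[OF that]]) (auto dest: vals[OF that])
  have VHb: "0 \<le> V j \<omega> * hh s (R \<omega> - 1) \<and> V j \<omega> * hh s (R \<omega> - 1) \<le> 3"
    if j: "j \<in> J" and \<omega>: "\<omega> \<in> space M" for j \<omega>
  proof (cases "V j \<omega> = 0")
    case True then show ?thesis by simp
  next
    case False
    then have v: "1 \<le> V j \<omega> \<and> V j \<omega> \<le> 3" using vals[OF j \<omega>] by auto
    have "V j \<omega> \<le> R \<omega>" unfolding R_def
      by (rule member_le_sum) (use j Vnn \<omega> fin in auto)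
    then have r: "0 \<le> R \<omega> - 1" using v by auto
    have "0 \<le> hh s (R \<omega> - 1)" "hh s (R \<omega> - 1) \<le> 1" using hh_nonneg[OF r s] hh_le1[OF r s] by auto
    then have "V j \<omega> * hh s (R \<omega> - 1) \<le> 3 * 1" using v by (intro mult_mono) auto
    then show ?thesis using v \<open>0 \<le> hh s (R \<omega> - 1)\<close> by auto
  qed
  have iVH: "integrable M (\<lambda>\<omega>. V j \<omega> * hh s (R \<omega> - 1))" if "j \<in> J" for j
  proof (rule bnd_int[where B=3])
    note VM[OF that, measurable]
    show "(\<lambda>\<omega>. V j \<omega> * hh s (R \<omega> - 1)) \<in> borel_measurable M" by measurable
  qed (use VHb[OF that] in auto)
  have perj: "(\<integral>\<omega>. V j \<omega> \<partial>M) * (\<integral>\<omega>. hh s (R \<omega>) \<partial>M) \<le> (\<integral>\<omega>. V j \<omega> * hh s (R \<omega> - 1) \<partial>M)"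
    if j: "j \<in> J" for j
  proof -
    note VM[OF j, measurable]
    define Rj where "Rj \<omega> = (\<Sum>k\<in>J-{j}. V k \<omega>)" for \<omega>
    have RjM[measurable]: "Rj \<in> borel_measurable M"
      unfolding Rj_def by (intro borel_measurable_sum VM) auto
    have RR: "R \<omega> = V j \<omega> + Rj \<omega>" for \<omega>
      unfolding R_def Rj_def using j fin by (simp add: sum.remove)
    have Rjnn: "0 \<le> Rj \<omega>" if "\<omega> \<in> space M" for \<omega>
      unfolding Rj_def using Vnn that by (intro sum_nonneg) auto
    have split: "(\<integral>\<omega>. V j \<omega> * hh s (c j + Rj \<omega>) \<partial>M)
        = (\<integral>\<omega>. V j \<omega> \<partial>M) * (\<integral>\<omega>. hh s (c j + Rj \<omega>) \<partial>M)"
      unfolding Rj_def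
      apply (rule indep_split[OF ind, of j "J - {j}" "\<lambda>x. x" "\<lambda>x. x" "\<lambda>r. hh s (c j + r)" 3 1])
      subgoal using j JI by auto
      subgoal using j JI by auto
      subgoal by auto
      subgoal by measurable
      subgoal by measurable
      subgoal by measurable
      subgoal by (auto dest: vals[OF j])
      subgoal for \<omega> using Rjnn[unfolded Rj_def, of \<omega>] c0[OF j] hh_nonneg[OF _ s] hh_le1[OF _ s]
        by (simp add: abs_le_iff)
      done
    have iHj: "integrable M (\<lambda>\<omega>. hh s (c j + Rj \<omega>))"
      by (rule bnd_int[where B=1]) (use Rjnn c0[OF j] s hh_nonneg hh_le1 in auto)
    have iVHj: "integrable M (\<lambda>\<omega>. V j \<omega> * hh s (c j + Rj \<omega>))"
    proof (rule bnd_int[where B=3])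
      fix \<omega> assume \<omega>: "\<omega> \<in> space M"
      have a: "0 \<le> hh s (c j + Rj \<omega>)" "hh s (c j + Rj \<omega>) \<le> 1"
        using Rjnn[OF \<omega>] c0[OF j] hh_nonneg[OF _ s] hh_le1[OF _ s] by auto
      have b: "0 \<le> V j \<omega>" "V j \<omega> \<le> 3" using vals[OF j \<omega>] by auto
      have "V j \<omega> * hh s (c j + Rj \<omega>) \<le> 3 * 1" using a b by (intro mult_mono) auto
      then show "\<bar>V j \<omega> * hh s (c j + Rj \<omega>)\<bar> \<le> 3" using a b by (simp add: abs_mult)
    qed measurable
    have EVnn: "0 \<le> (\<integral>\<omega>. V j \<omega> \<partial>M)" by (rule integral_nonneg_AE) (use Vnn[OF j] in \<open>auto intro!: AE_I2\<close>)
    have "(\<integral>\<omega>. hh s (R \<omega>) \<partial>M) \<le> (\<integral>\<omega>. hh s (c j + Rj \<omega>) \<partial>M)"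
    proof (rule integral_mono_AE[OF iH iHj])
      show "AE \<omega> in M. hh s (R \<omega>) \<le> hh s (c j + Rj \<omega>)"
        using cj[OF j] AE_space proof eventually_elim
        case (elim \<omega>)
        then show ?case using Rjnn[of \<omega>] c0[OF j] s unfolding RR
          by (intro hh_anti) auto
      qed
    qed
    then have "(\<integral>\<omega>. V j \<omega> \<partial>M) * (\<integral>\<omega>. hh s (R \<omega>) \<partial>M)
        \<le> (\<integral>\<omega>. V j \<omega> \<partial>M) * (\<integral>\<omega>. hh s (c j + Rj \<omega>) \<partial>M)"
      using EVnn by (rule mult_left_mono)
    also have "\<dots> = (\<integral>\<omega>. V j \<omega> * hh s (c j + Rj \<omega>) \<partial>M)" using split by simp
    also have "\<dots> \<le> (\<integral>\<omega>. V j \<omega> * hh s (R \<omega> - 1) \<partial>M)"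
    proof (rule integral_mono_AE[OF iVHj iVH[OF j]])
      show "AE \<omega> in M. V j \<omega> * hh s (c j + Rj \<omega>) \<le> V j \<omega> * hh s (R \<omega> - 1)"
        using cj[OF j] AE_space proof eventually_elim
        case (elim \<omega>)
        show ?case
        proof (cases "V j \<omega> = 0")
          case False
          then have v: "1 \<le> V j \<omega>" using vals[OF j elim(2)] by auto
          have "hh s (c j + Rj \<omega>) \<le> hh s (R \<omega> - 1)"
            using Rjnn[OF elim(2)] c0[OF j] s v elim(1) unfolding RR
            by (intro hh_anti) auto
          then show ?thesis using v by (intro mult_left_mono) auto
        qed simp
      qed
    qed
    finally show ?thesis .
  qed
  have iRH: "integrable M (\<lambda>\<omega>. R \<omega> * hh s (R \<omega> - 1))"
  proof (rule bnd_int[where B=1])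
    show "(\<lambda>\<omega>. R \<omega> * hh s (R \<omega> - 1)) \<in> borel_measurable M" by measurable
    fix \<omega> assume \<omega>: "\<omega> \<in> space M"
    have k: "R \<omega> * hh s (R \<omega> - 1) + s * hh s (R \<omega>) \<le> 1"
      using hh_key[of "R \<omega>" s] Rp[OF \<omega>] s by auto
    have n1: "0 \<le> s * hh s (R \<omega>)" using hh_nonneg[of "R \<omega>" s] Rp[OF \<omega>] s by auto
    have n2: "0 \<le> R \<omega> * hh s (R \<omega> - 1)"
      using Rp[OF \<omega>] hh_nonneg[of "R \<omega> - 1" s] s by auto
    show "\<bar>R \<omega> * hh s (R \<omega> - 1)\<bar> \<le> 1" using k n1 n2 by linarith
  qed
  have "(\<Sum>j\<in>J. \<integral>\<omega>. V j \<omega> \<partial>M) * (\<integral>\<omega>. hh s (R \<omega>) \<partial>M)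
      = (\<Sum>j\<in>J. (\<integral>\<omega>. V j \<omega> \<partial>M) * (\<integral>\<omega>. hh s (R \<omega>) \<partial>M))"
    by (rule sum_distrib_right)
  also have "\<dots> \<le> (\<Sum>j\<in>J. \<integral>\<omega>. V j \<omega> * hh s (R \<omega> - 1) \<partial>M)"
    by (rule sum_mono) (rule perj)
  also have "\<dots> = (\<integral>\<omega>. (\<Sum>j\<in>J. V j \<omega> * hh s (R \<omega> - 1)) \<partial>M)"
    using iVH by simp
  also have "\<dots> = (\<integral>\<omega>. R \<omega> * hh s (R \<omega> - 1) \<partial>M)"
    unfolding R_def by (simp add: sum_distrib_right)
  finally have A: "(\<Sum>j\<in>J. \<integral>\<omega>. V j \<omega> \<partial>M) * (\<integral>\<omega>. hh s (R \<omega>) \<partial>M)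
      \<le> (\<integral>\<omega>. R \<omega> * hh s (R \<omega> - 1) \<partial>M)" .
  have "((\<Sum>j\<in>J. \<integral>\<omega>. V j \<omega> \<partial>M) + s) * (\<integral>\<omega>. hh s (R \<omega>) \<partial>M)
     \<le> (\<integral>\<omega>. R \<omega> * hh s (R \<omega> - 1) \<partial>M) + (\<integral>\<omega>. s * hh s (R \<omega>) \<partial>M)"
    using A by (simp add: distrib_right)
  also have "\<dots> = (\<integral>\<omega>. R \<omega> * hh s (R \<omega> - 1) + s * hh s (R \<omega>) \<partial>M)"
    using iRH iH by simp
  also have "\<dots> \<le> (\<integral>\<omega>. 1 \<partial>M)"
  proof (rule integral_mono)
    show "integrable M (\<lambda>\<omega>. R \<omega> * hh s (R \<omega> - 1) + s * hh s (R \<omega>))" using iRH iH by simp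
    fix \<omega> assume \<omega>: "\<omega> \<in> space M"
    show "R \<omega> * hh s (R \<omega> - 1) + s * hh s (R \<omega>) \<le> 1"
      using hh_key[of "R \<omega>" s] Rp[OF \<omega>] s by auto
  qed simp
  also have "\<dots> = 1" by (simp add: prob_space)
  finally show ?thesis unfolding R_def .
qed

lemma meas_cont: "Z \<in> borel_measurable M \<Longrightarrow> continuous_on UNIV f \<Longrightarrow> (\<lambda>\<omega>. f (Z \<omega>)) \<in> borel_measurable M"
  by (rule measurable_compose[OF _ borel_measurable_continuous_onI])

lemma (in prob_space) per_index:
  fixes X Y Y' :: "nat \<Rightarrow> 'a \<Rightarrow> real" and n i :: nat
  assumes i: "i < n"
    and bern: "\<forall>i<n. \<forall>\<omega>\<in>space M. X i \<omega> \<in> {0, 1} \<and> Y i \<omega> \<in> {0, 1} \<and> Y' i \<omega> \<in> {0, 1}"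
    and indZ: "indep_vars (\<lambda>_. borel) (\<lambda>i \<omega>. (X i \<omega>, Y i \<omega>, Y' i \<omega>)) {..<n}"
    and XY0: "\<And>j. j < n \<Longrightarrow> AE \<omega> in M. X j \<omega> * Y j \<omega> = 0"
    and tp: "\<And>j. j < n \<Longrightarrow> (AE \<omega> in M. Y' j \<omega> = 0) \<or> (AE \<omega> in M. X j \<omega> + Y j \<omega> = 1)"
    and como: "(AE \<omega> in M. Y' i \<omega> = 0) \<or> (AE \<omega> in M. X i \<omega> \<le> Y' i \<omega>) \<or> (AE \<omega> in M. Y' i \<omega> \<le> X i \<omega>)"
    and big: "(\<Sum>j<n. \<integral>\<omega>. X j \<omega> + Y j \<omega> + Y' j \<omega> \<partial>M) > 1"
  shows "(\<integral>\<omega>. (if (\<Sum>j<n. X j \<omega>) + (\<Sum>j<n. Y j \<omega> + Y' j \<omega>) = 0 then 0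
             else X i \<omega> / ((\<Sum>j<n. X j \<omega>) + (\<Sum>j<n. Y j \<omega> + Y' j \<omega>))) \<partial>M)
         \<le> (\<integral>\<omega>. X i \<omega> \<partial>M) / ((\<Sum>j<n. \<integral>\<omega>. X j \<omega> + Y j \<omega> + Y' j \<omega> \<partial>M) - 1)
       \<and> (\<integral>\<omega>. (if (\<Sum>j<n. X j \<omega>) + (\<Sum>j<n. Y j \<omega> + Y' j \<omega>) = 0 then 0
             else (Y i \<omega> + Y' i \<omega>) / ((\<Sum>j<n. X j \<omega>) + (\<Sum>j<n. Y j \<omega> + Y' j \<omega>))) \<partial>M)
         \<le> ((\<integral>\<omega>. Y i \<omega> \<partial>M) + (\<integral>\<omega>. Y' i \<omega> \<partial>M)) / ((\<Sum>j<n. \<integral>\<omega>. X j \<omega> + Y j \<omega> + Y' j \<omega> \<partial>M) - 1)"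
proof -
  define Z where "Z = (\<lambda>i \<omega>. (X i \<omega>, Y i \<omega>, Y' i \<omega>))"
  define V where "V = (\<lambda>j \<omega>. X j \<omega> + Y j \<omega> + Y' j \<omega>)"
  define T where "T = (\<Sum>j<n. \<integral>\<omega>. V j \<omega> \<partial>M)"
  define J where "J = {..<n} - {i}"
  define R where "R \<omega> = (\<Sum>j\<in>J. V j \<omega>)" for \<omega>
  define p where "p = (\<integral>\<omega>. X i \<omega> \<partial>M)"
  define q where "q = (\<integral>\<omega>. Y i \<omega> \<partial>M)"
  define s where "s = (\<integral>\<omega>. Y' i \<omega> \<partial>M)"
  have indZ': "indep_vars (\<lambda>_. borel) Z {..<n}" using indZ unfolding Z_def .
  have ZM: "Z j \<in> borel_measurable M" if "j < n" for j
    using indZ' that unfolding indep_vars_def by auto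
  have XM: "X j \<in> borel_measurable M" if "j < n" for j
    using meas_cont[OF ZM[OF that], of fst] by (simp add: Z_def continuous_on_fst)
  have YM: "Y j \<in> borel_measurable M" if "j < n" for j
  proof -
    have "continuous_on UNIV (\<lambda>t::real\<times>real\<times>real. fst (snd t))" by (intro continuous_intros)
    from meas_cont[OF ZM[OF that] this] show ?thesis by (simp add: Z_def)
  qed
  have Y'M: "Y' j \<in> borel_measurable M" if "j < n" for j
  proof -
    have "continuous_on UNIV (\<lambda>t::real\<times>real\<times>real. snd (snd t))" by (intro continuous_intros)
    from meas_cont[OF ZM[OF that] this] show ?thesis by (simp add: Z_def)
  qed
  have VM: "V j \<in> borel_measurable M" if "j < n" for j
    unfolding V_def using XM[OF that] YM[OF that] Y'M[OF that] by measurable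
  have indV: "indep_vars (\<lambda>_. borel) V {..<n}"
  proof -
    have "indep_vars (\<lambda>_. borel) (\<lambda>j \<omega>. (\<lambda>t. fst t + fst (snd t) + snd (snd t)) (Z j \<omega>)) {..<n}"
      by (rule indep_vars_compose2[OF indZ'])
         (intro borel_measurable_continuous_onI continuous_intros)
    then show ?thesis unfolding V_def Z_def by simp
  qed
  have b01: "X j \<omega> \<in> {0,1}" "Y j \<omega> \<in> {0,1}" "Y' j \<omega> \<in> {0,1}" if "j < n" "\<omega> \<in> space M" for j \<omega>
    using bern that by auto
  have vals: "V j \<omega> = 0 \<or> (1 \<le> V j \<omega> \<and> V j \<omega> \<le> 3)" if "j \<in> J" "\<omega> \<in> space M" for j \<omega>
    using b01[of j \<omega>] that unfolding J_def V_def by auto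
  define c where "c j = (if (AE \<omega> in M. Y' j \<omega> = 0) then 0 else (1::real))" for j
  have cj: "AE \<omega> in M. c j \<le> V j \<omega> \<and> V j \<omega> \<le> c j + 1" if j: "j \<in> J" for j
  proof -
    have jn: "j < n" using j by (simp add: J_def)
    show ?thesis
    proof (cases "AE \<omega> in M. Y' j \<omega> = 0")
      case True
      have c: "c j = 0" using True by (simp add: c_def)
      show ?thesis using True XY0[OF jn] AE_space
      proof eventually_elim
        case (elim \<omega>)
        then show ?case using b01[OF jn elim(3)] c by (auto simp: V_def)
      qed
    next
      case False
      have c: "c j = 1" using False by (simp add: c_def)
      have "AE \<omega> in M. X j \<omega> + Y j \<omega> = 1" using tp[OF jn] False by auto
      then show ?thesis using AE_space
      proof eventually_elim
        case (elim \<omega>)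
        then show ?case using b01[OF jn elim(2)] c by (auto simp: V_def)
      qed
    qed
  qed
  have sI: "0 \<le> s" "s \<le> 1"
  proof -
    have "0 \<le> (\<integral>\<omega>. Y' i \<omega> \<partial>M)" by (rule integral_nonneg_AE) (auto intro!: AE_I2 dest: b01(3)[OF i])
    then show "0 \<le> s" unfolding s_def .
    have "(\<integral>\<omega>. Y' i \<omega> \<partial>M) \<le> (\<integral>\<omega>. 1 \<partial>M)"
      by (rule integral_mono) (auto intro!: bnd_int[where B=1] Y'M[OF i] dest: b01(3)[OF i])
    then show "s \<le> 1" unfolding s_def by (simp add: prob_space)
  qed
  have K: "((\<Sum>j\<in>J. \<integral>\<omega>. V j \<omega> \<partial>M) + s) * (\<integral>\<omega>. hh s (R \<omega>) \<partial>M) \<le> 1"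
    unfolding R_def
    apply (rule Klemma[OF indV, where c=c])
    subgoal by (auto simp: J_def)
    subgoal by (auto simp: J_def)
    subgoal by (rule vals)
    subgoal by (rule cj)
    subgoal by (simp add: c_def)
    subgoal by (rule sI)
    subgoal by (rule sI)
    done

  note XM[OF i, measurable] YM[OF i, measurable] Y'M[OF i, measurable] VM[OF i, measurable]
  have iX: "integrable M (X i)" by (rule bnd_int[where B=1]) (auto dest: b01(1)[OF i])
  have iY: "integrable M (Y i)" by (rule bnd_int[where B=1]) (auto dest: b01(2)[OF i])
  have iY': "integrable M (Y' i)" by (rule bnd_int[where B=1]) (auto dest: b01(3)[OF i])
  have iV: "integrable M (V j)" if "j < n" for j
  proof (rule bnd_int[where B=3, OF VM[OF that]])
    fix \<omega> assume "\<omega> \<in> space M"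
    from b01[OF that this] show "\<bar>V j \<omega>\<bar> \<le> 3" by (auto simp: V_def)
  qed
  have Vnn: "0 \<le> V j \<omega>" if "j < n" "\<omega> \<in> space M" for j \<omega>
    using b01[OF that] by (auto simp: V_def)
  have RM[measurable]: "R \<in> borel_measurable M"
    unfolding R_def by (intro borel_measurable_sum VM) (auto simp: J_def)
  have Rnn: "0 \<le> R \<omega>" if "\<omega> \<in> space M" for \<omega>
    unfolding R_def by (intro sum_nonneg Vnn) (auto simp: J_def that)
  have inv1: "\<bar>1 / (k + x)\<bar> \<le> 1" if "0 \<le> x" "1 \<le> k" for x k :: real
    using that by (auto simp: abs_of_pos divide_le_eq)
  have bi: "(X i \<omega> = 0 \<or> X i \<omega> = 1) \<and> (Y i \<omega> = 0 \<or> Y i \<omega> = 1) \<and> (Y' i \<omega> = 0 \<or> Y' i \<omega> = 1)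
      \<and> \<bar>1 / (1 + R \<omega>)\<bar> \<le> 1 \<and> \<bar>1 / (2 + R \<omega>)\<bar> \<le> 1 \<and> 0 \<le> R \<omega>"
    if "\<omega> \<in> space M" for \<omega>
    using b01[OF i that] Rnn[OF that] inv1[of "R \<omega>" 1] inv1[of "R \<omega>" 2] by auto
  define a where "a = (\<integral>\<omega>. 1 / (1 + R \<omega>) \<partial>M)"
  define b where "b = (\<integral>\<omega>. 1 / (2 + R \<omega>) \<partial>M)"
  have ia: "integrable M (\<lambda>\<omega>. 1 / (1 + R \<omega>))"
  proof (rule bnd_int[where B=1])
    fix \<omega> assume \<omega>: "\<omega> \<in> space M"
    from bi[OF \<omega>] show "\<bar>1 / (1 + R \<omega>)\<bar> \<le> 1" by (auto simp: abs_mult)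
  qed measurable
  have ib: "integrable M (\<lambda>\<omega>. 1 / (2 + R \<omega>))"
  proof (rule bnd_int[where B=1])
    fix \<omega> assume \<omega>: "\<omega> \<in> space M"
    from bi[OF \<omega>] show "\<bar>1 / (2 + R \<omega>)\<bar> \<le> 1" by (auto simp: abs_mult)
  qed measurable
  have ba: "b \<le> a" unfolding a_def b_def
    by (rule integral_mono[OF ib ia]) (auto intro!: divide_left_mono dest: Rnn)
  have b0: "0 \<le> b" unfolding b_def
    by (rule integral_nonneg_AE) (auto intro!: AE_I2 dest: Rnn)
  have a0: "0 \<le> a" using ba b0 by simp
  have hsplit: "(\<integral>\<omega>. hh s (R \<omega>) \<partial>M) = s * b + (1 - s) * a"
  proof -
    have "(\<lambda>\<omega>. hh s (R \<omega>)) = (\<lambda>\<omega>. s * (1 / (2 + R \<omega>)) + (1 - s) * (1 / (1 + R \<omega>)))"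
      by (simp add: hh_def fun_eq_iff)
    then show ?thesis unfolding a_def b_def
      by (simp only: Bochner_Integration.integral_add[OF integrable_mult_right[OF ib] integrable_mult_right[OF ia]] integral_mult_right_zero)
  qed
  define m where "m = (\<Sum>j\<in>J. \<integral>\<omega>. V j \<omega> \<partial>M)"
  have Tm: "T = (\<integral>\<omega>. V i \<omega> \<partial>M) + m"
    unfolding T_def m_def J_def using i by (simp add: sum.remove)
  have EVi: "(\<integral>\<omega>. V i \<omega> \<partial>M) = p + q + s"
    unfolding V_def p_def q_def s_def using iX iY iY' by simp
  have Ssum: "(\<Sum>j<n. X j \<omega>) + (\<Sum>j<n. Y j \<omega> + Y' j \<omega>) = V i \<omega> + R \<omega>" for \<omega>
  proof -
    have "(\<Sum>j<n. X j \<omega>) + (\<Sum>j<n. Y j \<omega> + Y' j \<omega>) = (\<Sum>j<n. V j \<omega>)"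
      by (simp add: V_def sum.distrib add.assoc)
    also have "\<dots> = V i \<omega> + R \<omega>" unfolding R_def J_def using i by (simp add: sum.remove)
    finally show ?thesis .
  qed
  have IS: "(\<integral>\<omega>. f (Z i \<omega>) * (1 / (k + R \<omega>)) \<partial>M)
      = (\<integral>\<omega>. f (Z i \<omega>) \<partial>M) * (\<integral>\<omega>. 1 / (k + R \<omega>) \<partial>M)"
    if f: "continuous_on UNIV f" and fb: "\<And>\<omega>. \<omega> \<in> space M \<Longrightarrow> \<bar>f (Z i \<omega>)\<bar> \<le> B" and k: "1 \<le> k"
    for f :: "real \<times> real \<times> real \<Rightarrow> real" and B k :: real
  proof -
    have "(\<integral>\<omega>. f (Z i \<omega>) * (1 / (k + (\<Sum>j\<in>J. fst (Z j \<omega>) + fst (snd (Z j \<omega>)) + snd (snd (Z j \<omega>))))) \<partial>M)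
      = (\<integral>\<omega>. f (Z i \<omega>) \<partial>M) * (\<integral>\<omega>. 1 / (k + (\<Sum>j\<in>J. fst (Z j \<omega>) + fst (snd (Z j \<omega>)) + snd (snd (Z j \<omega>)))) \<partial>M)"
      apply (rule indep_split[OF indZ', of i J f "\<lambda>t. fst t + fst (snd t) + snd (snd t)" "\<lambda>r. 1 / (k + r)" B 1])
      subgoal using i by simp
      subgoal by (auto simp: J_def)
      subgoal by (simp add: J_def)
      subgoal by (rule borel_measurable_continuous_onI[OF f])
      subgoal by (intro borel_measurable_continuous_onI continuous_intros)
      subgoal by measurable
      subgoal by (rule fb)
      subgoal for \<omega> using Rnn[of \<omega>] k by (auto simp: R_def V_def Z_def intro!: inv1)
      done
    then show ?thesis by (simp add: R_def V_def Z_def)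
  qed
  have Sif: "\<And>F. (\<integral>\<omega>. (if (\<Sum>j<n. X j \<omega>) + (\<Sum>j<n. Y j \<omega> + Y' j \<omega>) = 0 then 0
             else F \<omega> / ((\<Sum>j<n. X j \<omega>) + (\<Sum>j<n. Y j \<omega> + Y' j \<omega>))) \<partial>M)
      = (\<integral>\<omega>. (if V i \<omega> + R \<omega> = 0 then 0 else F \<omega> / (V i \<omega> + R \<omega>)) \<partial>M)"
    by (simp only: Ssum)
  define ex1 where "ex1 = (\<integral>\<omega>. X i \<omega> * Y' i \<omega> \<partial>M)"
  define ex2 where "ex2 = (\<integral>\<omega>. X i \<omega> * (1 - Y' i \<omega>) \<partial>M)"
  define ey1 where "ey1 = (\<integral>\<omega>. Y' i \<omega> * (Y i \<omega> + 1) \<partial>M)"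
  define ey2 where "ey2 = (\<integral>\<omega>. (1 - Y' i \<omega>) * Y i \<omega> \<partial>M)"
  have EDX: "(\<integral>\<omega>. (if V i \<omega> + R \<omega> = 0 then 0 else X i \<omega> / (V i \<omega> + R \<omega>)) \<partial>M) = ex1 * b + ex2 * a"
  proof -
    have "(\<integral>\<omega>. (if V i \<omega> + R \<omega> = 0 then 0 else X i \<omega> / (V i \<omega> + R \<omega>)) \<partial>M)
        = (\<integral>\<omega>. X i \<omega> * Y' i \<omega> * (1 / (2 + R \<omega>)) + X i \<omega> * (1 - Y' i \<omega>) * (1 / (1 + R \<omega>)) \<partial>M)"
    proof (rule integral_cong_AE)
      show "AE \<omega> in M. (if V i \<omega> + R \<omega> = 0 then 0 else X i \<omega> / (V i \<omega> + R \<omega>))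
          = X i \<omega> * Y' i \<omega> * (1 / (2 + R \<omega>)) + X i \<omega> * (1 - Y' i \<omega>) * (1 / (1 + R \<omega>))"
        using XY0[OF i] AE_space
      proof eventually_elim
        case (elim \<omega>)
        then show ?case using b01[OF i elim(2)] Rnn[OF elim(2)] by (auto simp: V_def)
      qed
    qed measurable
    also have "\<dots> = ex1 * b + ex2 * a"
    proof -
      have i1: "integrable M (\<lambda>\<omega>. X i \<omega> * Y' i \<omega> * (1 / (2 + R \<omega>)))"
        proof (rule bnd_int[where B=1])
          fix \<omega> assume \<omega>: "\<omega> \<in> space M"
          from bi[OF \<omega>] show "\<bar>X i \<omega> * Y' i \<omega> * (1 / (2 + R \<omega>))\<bar> \<le> 1" by (auto simp: abs_mult)
        qed measurable
      have i2: "integrable M (\<lambda>\<omega>. X i \<omega> * (1 - Y' i \<omega>) * (1 / (1 + R \<omega>)))"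
        proof (rule bnd_int[where B=1])
          fix \<omega> assume \<omega>: "\<omega> \<in> space M"
          from bi[OF \<omega>] show "\<bar>X i \<omega> * (1 - Y' i \<omega>) * (1 / (1 + R \<omega>))\<bar> \<le> 1" by (auto simp: abs_mult)
        qed measurable
      have e1: "(\<integral>\<omega>. X i \<omega> * Y' i \<omega> * (1 / (2 + R \<omega>)) \<partial>M) = ex1 * b"
      proof -
        have c: "continuous_on UNIV (\<lambda>t::real\<times>real\<times>real. fst t * snd (snd t))" by (intro continuous_intros)
        have bd: "\<bar>(\<lambda>t. fst t * snd (snd t)) (Z i \<omega>)\<bar> \<le> 1" if "\<omega> \<in> space M" for \<omega>
          using bi[OF that] by (auto simp: Z_def abs_mult)
        have k: "1 \<le> (2::real)" by simp
        from IS[OF c bd k] show ?thesis by (simp add: Z_def ex1_def b_def)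
      qed
      have e2: "(\<integral>\<omega>. X i \<omega> * (1 - Y' i \<omega>) * (1 / (1 + R \<omega>)) \<partial>M) = ex2 * a"
      proof -
        have c: "continuous_on UNIV (\<lambda>t::real\<times>real\<times>real. fst t * (1 - snd (snd t)))" by (intro continuous_intros)
        have bd: "\<bar>(\<lambda>t. fst t * (1 - snd (snd t))) (Z i \<omega>)\<bar> \<le> 1" if "\<omega> \<in> space M" for \<omega>
          using bi[OF that] by (auto simp: Z_def abs_mult)
        have k: "1 \<le> (1::real)" by simp
        from IS[OF c bd k] show ?thesis by (simp add: Z_def ex2_def a_def)
      qed
      show ?thesis using i1 i2 e1 e2 by simp
    qed
    finally show ?thesis .
  qed
  have XYi: "AE \<omega> in M. Y' i \<omega> = 0 \<or> X i \<omega> + Y i \<omega> = 1"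
    using tp[OF i] by (auto elim: AE_mp)
  have EDY: "(\<integral>\<omega>. (if V i \<omega> + R \<omega> = 0 then 0 else (Y i \<omega> + Y' i \<omega>) / (V i \<omega> + R \<omega>)) \<partial>M) = ey1 * b + ey2 * a"
  proof -
    have "(\<integral>\<omega>. (if V i \<omega> + R \<omega> = 0 then 0 else (Y i \<omega> + Y' i \<omega>) / (V i \<omega> + R \<omega>)) \<partial>M)
        = (\<integral>\<omega>. Y' i \<omega> * (Y i \<omega> + 1) * (1 / (2 + R \<omega>)) + (1 - Y' i \<omega>) * Y i \<omega> * (1 / (1 + R \<omega>)) \<partial>M)"
    proof (rule integral_cong_AE)
      show "AE \<omega> in M. (if V i \<omega> + R \<omega> = 0 then 0 else (Y i \<omega> + Y' i \<omega>) / (V i \<omega> + R \<omega>))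
          = Y' i \<omega> * (Y i \<omega> + 1) * (1 / (2 + R \<omega>)) + (1 - Y' i \<omega>) * Y i \<omega> * (1 / (1 + R \<omega>))"
        using XY0[OF i] XYi AE_space
      proof eventually_elim
        case (elim \<omega>)
        then show ?case using b01[OF i elim(3)] Rnn[OF elim(3)] by (auto simp: V_def)
      qed
    qed measurable
    also have "\<dots> = ey1 * b + ey2 * a"
    proof -
      have i1: "integrable M (\<lambda>\<omega>. Y' i \<omega> * (Y i \<omega> + 1) * (1 / (2 + R \<omega>)))"
        proof (rule bnd_int[where B=2])
          fix \<omega> assume \<omega>: "\<omega> \<in> space M"
          from bi[OF \<omega>] show "\<bar>Y' i \<omega> * (Y i \<omega> + 1) * (1 / (2 + R \<omega>))\<bar> \<le> 2" by (auto simp: abs_mult divide_le_eq)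
        qed measurable
      have i2: "integrable M (\<lambda>\<omega>. (1 - Y' i \<omega>) * Y i \<omega> * (1 / (1 + R \<omega>)))"
        proof (rule bnd_int[where B=1])
          fix \<omega> assume \<omega>: "\<omega> \<in> space M"
          from bi[OF \<omega>] show "\<bar>(1 - Y' i \<omega>) * Y i \<omega> * (1 / (1 + R \<omega>))\<bar> \<le> 1" by (auto simp: abs_mult)
        qed measurable
      have e1: "(\<integral>\<omega>. Y' i \<omega> * (Y i \<omega> + 1) * (1 / (2 + R \<omega>)) \<partial>M) = ey1 * b"
      proof -
        have c: "continuous_on UNIV (\<lambda>t::real\<times>real\<times>real. snd (snd t) * (fst (snd t) + 1))" by (intro continuous_intros)
        have bd: "\<bar>(\<lambda>t. snd (snd t) * (fst (snd t) + 1)) (Z i \<omega>)\<bar> \<le> 2" if "\<omega> \<in> space M" for \<omega>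
          using bi[OF that] by (auto simp: Z_def abs_mult)
        have k: "1 \<le> (2::real)" by simp
        from IS[OF c bd k] show ?thesis by (simp add: Z_def ey1_def b_def)
      qed
      have e2: "(\<integral>\<omega>. (1 - Y' i \<omega>) * Y i \<omega> * (1 / (1 + R \<omega>)) \<partial>M) = ey2 * a"
      proof -
        have c: "continuous_on UNIV (\<lambda>t::real\<times>real\<times>real. (1 - snd (snd t)) * fst (snd t))" by (intro continuous_intros)
        have bd: "\<bar>(\<lambda>t. (1 - snd (snd t)) * fst (snd t)) (Z i \<omega>)\<bar> \<le> 1" if "\<omega> \<in> space M" for \<omega>
          using bi[OF that] by (auto simp: Z_def abs_mult)
        have k: "1 \<le> (1::real)" by simp
        from IS[OF c bd k] show ?thesis by (simp add: Z_def ey2_def a_def)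
      qed
      show ?thesis using i1 i2 e1 e2 by simp
    qed
    finally show ?thesis .
  qed
  have Tdef: "(\<Sum>j<n. \<integral>\<omega>. X j \<omega> + Y j \<omega> + Y' j \<omega> \<partial>M) = T" unfolding T_def V_def ..
  have L0: "T - 1 > 0" using big Tdef by simp
  have K': "(m + s) * (s * b + (1 - s) * a) \<le> 1" using K hsplit unfolding m_def by simp
  have ae: "AE \<omega> in M. P \<omega>" if "AE \<omega> in M. Q \<omega>" "\<And>\<omega>. \<omega> \<in> space M \<Longrightarrow> Q \<omega> \<Longrightarrow> P \<omega>" for P Q
    using that(1) AE_space by eventually_elim (auto intro: that(2))
  have pnn: "0 \<le> p" unfolding p_def by (rule integral_nonneg_AE) (auto intro!: AE_I2 dest: bi)
  have qnn: "0 \<le> q" unfolding q_def by (rule integral_nonneg_AE) (auto intro!: AE_I2 dest: bi)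
  have m_eq: "T = p + q + s + m" using Tm EVi by simp
  have final: "ex1 * b + ex2 * a \<le> p / (T - 1) \<and> ey1 * b + ey2 * a \<le> (q + s) / (T - 1)"
  proof (cases "AE \<omega> in M. Y' i \<omega> = 0")
    case True
    have s0: "s = 0" unfolding s_def
      apply (subst integral_cong_AE[where g="\<lambda>_. 0"])
         apply measurable
      using True by auto
    have e1: "ex1 = 0" unfolding ex1_def
      apply (subst integral_cong_AE[where g="\<lambda>_. 0"])
         apply measurable
       apply (rule ae[OF True]) by auto
    have e2: "ex2 = p" unfolding ex2_def p_def
      apply (rule integral_cong_AE)
        apply measurable
      apply (rule ae[OF True]) by auto
    have e3: "ey1 = 0" unfolding ey1_def
      apply (subst integral_cong_AE[where g="\<lambda>_. 0"])
         apply measurable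
       apply (rule ae[OF True]) by auto
    have e4: "ey2 = q" unfolding ey2_def q_def
      apply (rule integral_cong_AE)
        apply measurable
      apply (rule ae[OF True]) by auto
    have pq: "p + q \<le> 1"
    proof -
      have "(\<integral>\<omega>. X i \<omega> + Y i \<omega> \<partial>M) \<le> (\<integral>\<omega>. 1 \<partial>M)"
        apply (rule integral_mono_AE)
          apply (rule Bochner_Integration.integrable_add[OF iX iY])
         apply simp
        apply (rule ae[OF XY0[OF i]])
        by (auto dest: bi)
      then show ?thesis using iX iY by (simp add: p_def q_def prob_space)
    qed
    have Lm: "T - 1 \<le> m" using m_eq pq s0 by simp
    have KA: "(m + 0) * (0 * b + (1 - 0) * a) \<le> 1" using K' unfolding s0 .
    show ?thesis
      using alg_A[OF L0 Lm KA a0 pnn] alg_A[OF L0 Lm KA a0 qnn] unfolding e1 e2 e3 e4 s0 by simp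
  next
    case False
    have hXY: "AE \<omega> in M. X i \<omega> + Y i \<omega> = 1" using tp[OF i] False by auto
    have pq: "p + q = 1"
    proof -
      have "(\<integral>\<omega>. X i \<omega> + Y i \<omega> \<partial>M) = (\<integral>\<omega>. 1 \<partial>M)"
        apply (rule integral_cong_AE)
          apply measurable
        by (rule hXY)
      then show ?thesis using iX iY by (simp add: p_def q_def prob_space)
    qed
    have LL: "T - 1 = m + s" using m_eq pq by simp
    have q_eq: "q = 1 - p" using pq by simp
    have KB: "(T - 1) * (s * b + (1 - s) * a) \<le> 1" using K' unfolding LL .
    have como': "(AE \<omega> in M. X i \<omega> \<le> Y' i \<omega>) \<or> (AE \<omega> in M. Y' i \<omega> \<le> X i \<omega>)"
      using como False by auto
    then show ?thesis
    proof
      assume sub: "AE \<omega> in M. X i \<omega> \<le> Y' i \<omega>"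
      have e1: "ex1 = p" unfolding ex1_def p_def
        apply (rule integral_cong_AE)
          apply measurable
        apply (rule ae[OF sub]) by (auto dest: bi)
      have e2: "ex2 = 0" unfolding ex2_def
        apply (subst integral_cong_AE[where g="\<lambda>_. 0"])
           apply measurable
         apply (rule ae[OF sub]) by (auto dest: bi)
      have e3: "ey1 = 2 * s - p"
      proof -
        have "ey1 = (\<integral>\<omega>. 2 * Y' i \<omega> - X i \<omega> \<partial>M)" unfolding ey1_def
          apply (rule integral_cong_AE)
            apply measurable
          apply (rule ae[OF AE_conjI[OF sub hXY]]) by (auto dest: bi)
        then show ?thesis using iX iY' by (simp add: s_def p_def)
      qed
      have e4: "ey2 = 1 - s"
      proof -
        have "ey2 = (\<integral>\<omega>. 1 - Y' i \<omega> \<partial>M)" unfolding ey2_def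
          apply (rule integral_cong_AE)
            apply measurable
          apply (rule ae[OF AE_conjI[OF sub hXY]]) by (auto dest: bi)
        then show ?thesis using iY' by (simp add: s_def prob_space)
      qed
      have ps: "p \<le> s" unfolding p_def s_def
        by (rule integral_mono_AE[OF iX iY' sub])
      show ?thesis
        using alg_B1[OF L0 KB ba b0 sI pnn ps] unfolding e1 e2 e3 e4 q_eq
        by simp
    next
      assume sub: "AE \<omega> in M. Y' i \<omega> \<le> X i \<omega>"
      have e1: "ex1 = s" unfolding ex1_def s_def
        apply (rule integral_cong_AE)
          apply measurable
        apply (rule ae[OF sub]) by (auto dest: bi)
      have e2: "ex2 = p - s"
      proof -
        have "ex2 = (\<integral>\<omega>. X i \<omega> - Y' i \<omega> \<partial>M)" unfolding ex2_def
          apply (rule integral_cong_AE)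
            apply measurable
          apply (rule ae[OF sub]) by (auto dest: bi)
        then show ?thesis using iX iY' by (simp add: s_def p_def)
      qed
      have e3: "ey1 = s" unfolding ey1_def s_def
        apply (rule integral_cong_AE)
          apply measurable
        apply (rule ae[OF AE_conjI[OF sub hXY]]) by (auto dest: bi)
      have e4: "ey2 = q" unfolding ey2_def q_def
        apply (rule integral_cong_AE)
          apply measurable
        apply (rule ae[OF AE_conjI[OF sub hXY]]) by (auto dest: bi)
      have sp: "s \<le> p" unfolding p_def s_def
        by (rule integral_mono_AE[OF iY' iX sub])
      have p1: "p \<le> 1" using pq qnn by simp
      show ?thesis
        using alg_B2[OF L0 KB ba b0 sI(1) sp p1] unfolding e1 e2 e3 e4 q_eq
        by simp
    qed
  qed
  show ?thesis unfolding Sif EDX EDY Tdef using final by (simp add: p_def q_def s_def)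
qed

theorem theorem4:
  fixes M :: "'a measure" and n :: nat and X Y Y' :: "nat \<Rightarrow> 'a \<Rightarrow> real"
  defines "SX \<equiv> (\<lambda>\<omega>. \<Sum>i<n. X i \<omega>)"
      and "SY \<equiv> (\<lambda>\<omega>. \<Sum>i<n. Y i \<omega> + Y' i \<omega>)"
  assumes prob: "prob_space M"
    and bern: "\<forall>i<n. \<forall>\<omega>\<in>space M. X i \<omega> \<in> {0, 1} \<and> Y i \<omega> \<in> {0, 1} \<and> Y' i \<omega> \<in> {0, 1}"
    and indep: "prob_space.indep_vars M (\<lambda>_. borel)
                  (\<lambda>i \<omega>. (X i \<omega>, Y i \<omega>, Y' i \<omega>)) {..<n}"
    and disj: "\<forall>i<n. (\<integral>\<omega>. X i \<omega> * Y i \<omega> \<partial>M) = 0"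
    and cases: "\<forall>i<n. (\<integral>\<omega>. Y' i \<omega> \<partial>M) = 0 \<or>
       ((\<integral>\<omega>. Y i \<omega> \<partial>M) = 1 - (\<integral>\<omega>. X i \<omega> \<partial>M) \<and>
        (\<exists>\<theta> :: 'a \<Rightarrow> real. \<theta> \<in> borel_measurable M \<and>
            distr M lborel \<theta> = uniform_measure lborel {0..1} \<and>
            (AE \<omega> in M. X i \<omega> = (if \<theta> \<omega> < (\<integral>\<omega>. X i \<omega> \<partial>M) then 1 else 0) \<and>
                          Y' i \<omega> = (if \<theta> \<omega> < (\<integral>\<omega>. Y' i \<omega> \<partial>M) then 1 else 0))))"
    and big: "(\<integral>\<omega>. SX \<omega> \<partial>M) + (\<integral>\<omega>. SY \<omega> \<partial>M) > 1"
  shows "(((\<integral>\<omega>. SX \<omega> \<partial>M) - 1) / ((\<integral>\<omega>. SX \<omega> \<partial>M) + (\<integral>\<omega>. SY \<omega> \<partial>M) - 1)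
           \<le> (\<integral>\<omega>. (if SX \<omega> + SY \<omega> = 0 then 1 else SX \<omega> / (SX \<omega> + SY \<omega>)) \<partial>M)) \<and>
         ((\<integral>\<omega>. (if SX \<omega> + SY \<omega> = 0 then 0 else SX \<omega> / (SX \<omega> + SY \<omega>)) \<partial>M)
           \<le> (\<integral>\<omega>. SX \<omega> \<partial>M) / ((\<integral>\<omega>. SX \<omega> \<partial>M) + (\<integral>\<omega>. SY \<omega> \<partial>M) - 1))"
proof -
  interpret prob_space M by (rule prob)
  define Z where "Z = (\<lambda>i \<omega>. (X i \<omega>, Y i \<omega>, Y' i \<omega>))"
  have indZ': "indep_vars (\<lambda>_. borel) Z {..<n}" using indep unfolding Z_def .
  have ZM: "Z j \<in> borel_measurable M" if "j < n" for j
    using indZ' that unfolding indep_vars_def by auto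
  have XM: "X j \<in> borel_measurable M" if "j < n" for j
    using meas_cont[OF ZM[OF that], of fst] by (simp add: Z_def continuous_on_fst)
  have YM: "Y j \<in> borel_measurable M" if "j < n" for j
  proof -
    have "continuous_on UNIV (\<lambda>t::real\<times>real\<times>real. fst (snd t))" by (intro continuous_intros)
    from meas_cont[OF ZM[OF that] this] show ?thesis by (simp add: Z_def)
  qed
  have Y'M: "Y' j \<in> borel_measurable M" if "j < n" for j
  proof -
    have "continuous_on UNIV (\<lambda>t::real\<times>real\<times>real. snd (snd t))" by (intro continuous_intros)
    from meas_cont[OF ZM[OF that] this] show ?thesis by (simp add: Z_def)
  qed
  have bj: "(X j \<omega> = 0 \<or> X j \<omega> = 1) \<and> (Y j \<omega> = 0 \<or> Y j \<omega> = 1) \<and> (Y' j \<omega> = 0 \<or> Y' j \<omega> = 1)"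
    if "j < n" "\<omega> \<in> space M" for j \<omega>
    using bern that by auto
  have iX: "integrable M (X j)" if "j < n" for j
  proof (rule bnd_int[where B=1, OF XM[OF that]])
    fix \<omega> assume "\<omega> \<in> space M" from bj[OF that this] show "\<bar>X j \<omega>\<bar> \<le> 1" by auto
  qed
  have iY: "integrable M (Y j)" if "j < n" for j
  proof (rule bnd_int[where B=1, OF YM[OF that]])
    fix \<omega> assume "\<omega> \<in> space M" from bj[OF that this] show "\<bar>Y j \<omega>\<bar> \<le> 1" by auto
  qed
  have iY': "integrable M (Y' j)" if "j < n" for j
  proof (rule bnd_int[where B=1, OF Y'M[OF that]])
    fix \<omega> assume "\<omega> \<in> space M" from bj[OF that this] show "\<bar>Y' j \<omega>\<bar> \<le> 1" by auto
  qed
  have ae: "AE \<omega> in M. P \<omega>" if "AE \<omega> in M. Q \<omega>" "\<And>\<omega>. \<omega> \<in> space M \<Longrightarrow> Q \<omega> \<Longrightarrow> P \<omega>" for P Q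
    using that(1) AE_space by eventually_elim (auto intro: that(2))
  have XY0: "AE \<omega> in M. X j \<omega> * Y j \<omega> = 0" if j: "j < n" for j
  proof -
    note XM[OF j, measurable] YM[OF j, measurable]
    have i: "integrable M (\<lambda>\<omega>. X j \<omega> * Y j \<omega>)"
    proof (rule bnd_int[where B=1])
      fix \<omega> assume "\<omega> \<in> space M" from bj[OF j this] show "\<bar>X j \<omega> * Y j \<omega>\<bar> \<le> 1" by auto
    qed measurable
    have "AE \<omega> in M. 0 \<le> X j \<omega> * Y j \<omega>" by (rule AE_I2) (use bj[OF j] in fastforce)
    then show ?thesis using integral_nonneg_eq_0_iff_AE[OF i] disj j by auto
  qed
  have typ2: "(AE \<omega> in M. Y' j \<omega> = 0) \<or> ((AE \<omega> in M. X j \<omega> + Y j \<omega> = 1) \<and>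
      ((AE \<omega> in M. X j \<omega> \<le> Y' j \<omega>) \<or> (AE \<omega> in M. Y' j \<omega> \<le> X j \<omega>)))" if j: "j < n" for j
  proof (cases "(\<integral>\<omega>. Y' j \<omega> \<partial>M) = 0")
    case True
    have "AE \<omega> in M. 0 \<le> Y' j \<omega>" by (rule AE_I2) (use bj[OF j] in fastforce)
    then show ?thesis using integral_nonneg_eq_0_iff_AE[OF iY'[OF j]] True by auto
  next
    case False
    note XM[OF j, measurable] YM[OF j, measurable] Y'M[OF j, measurable]
    have cj: "(\<integral>\<omega>. Y' j \<omega> \<partial>M) = 0 \<or>
       ((\<integral>\<omega>. Y j \<omega> \<partial>M) = 1 - (\<integral>\<omega>. X j \<omega> \<partial>M) \<and>
        (\<exists>\<theta> :: 'a \<Rightarrow> real. \<theta> \<in> borel_measurable M \<and>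
            distr M lborel \<theta> = uniform_measure lborel {0..1} \<and>
            (AE \<omega> in M. X j \<omega> = (if \<theta> \<omega> < (\<integral>\<omega>. X j \<omega> \<partial>M) then 1 else 0) \<and>
                          Y' j \<omega> = (if \<theta> \<omega> < (\<integral>\<omega>. Y' j \<omega> \<partial>M) then 1 else 0))))"
      using cases j by blast
    with False have qy: "(\<integral>\<omega>. Y j \<omega> \<partial>M) = 1 - (\<integral>\<omega>. X j \<omega> \<partial>M)"
      and "\<exists>\<theta> :: 'a \<Rightarrow> real. \<theta> \<in> borel_measurable M \<and>
            distr M lborel \<theta> = uniform_measure lborel {0..1} \<and>
            (AE \<omega> in M. X j \<omega> = (if \<theta> \<omega> < (\<integral>\<omega>. X j \<omega> \<partial>M) then 1 else 0) \<and>
                          Y' j \<omega> = (if \<theta> \<omega> < (\<integral>\<omega>. Y' j \<omega> \<partial>M) then 1 else 0))" by blast+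
    then obtain \<theta> :: "'a \<Rightarrow> real" where th: "AE \<omega> in M. X j \<omega> = (if \<theta> \<omega> < (\<integral>\<omega>. X j \<omega> \<partial>M) then 1 else 0) \<and>
                          Y' j \<omega> = (if \<theta> \<omega> < (\<integral>\<omega>. Y' j \<omega> \<partial>M) then 1 else 0)" by blast
    have i: "integrable M (\<lambda>\<omega>. 1 - X j \<omega> - Y j \<omega>)" using iX[OF j] iY[OF j] by simp
    have "AE \<omega> in M. 0 \<le> 1 - X j \<omega> - Y j \<omega>" by (rule ae[OF XY0[OF j]]) (use bj[OF j] in fastforce)
    moreover have "(\<integral>\<omega>. 1 - X j \<omega> - Y j \<omega> \<partial>M) = 0" using iX[OF j] iY[OF j] qy by (simp add: prob_space)
    ultimately have "AE \<omega> in M. 1 - X j \<omega> - Y j \<omega> = 0" using integral_nonneg_eq_0_iff_AE[OF i] by auto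
    then have h1: "AE \<omega> in M. X j \<omega> + Y j \<omega> = 1" by (rule ae) auto
    have h2: "(AE \<omega> in M. X j \<omega> \<le> Y' j \<omega>) \<or> (AE \<omega> in M. Y' j \<omega> \<le> X j \<omega>)"
    proof (cases "(\<integral>\<omega>. X j \<omega> \<partial>M) \<le> (\<integral>\<omega>. Y' j \<omega> \<partial>M)")
      case True
      have "AE \<omega> in M. X j \<omega> \<le> Y' j \<omega>" by (rule ae[OF th]) (use True in auto)
      then show ?thesis ..
    next
      case False
      have "AE \<omega> in M. Y' j \<omega> \<le> X j \<omega>" by (rule ae[OF th]) (use False in auto)
      then show ?thesis ..
    qed
    show ?thesis using h1 h2 by auto
  qed
  have tp: "(AE \<omega> in M. Y' j \<omega> = 0) \<or> (AE \<omega> in M. X j \<omega> + Y j \<omega> = 1)" if "j < n" for j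
    using typ2[OF that] by auto
  have como: "(AE \<omega> in M. Y' j \<omega> = 0) \<or> (AE \<omega> in M. X j \<omega> \<le> Y' j \<omega>) \<or> (AE \<omega> in M. Y' j \<omega> \<le> X j \<omega>)" if "j < n" for j
    using typ2[OF that] by auto
  have ESX: "(\<integral>\<omega>. SX \<omega> \<partial>M) = (\<Sum>j<n. \<integral>\<omega>. X j \<omega> \<partial>M)"
    unfolding SX_def using iX by simp
  have ESY: "(\<integral>\<omega>. SY \<omega> \<partial>M) = (\<Sum>j<n. (\<integral>\<omega>. Y j \<omega> \<partial>M) + (\<integral>\<omega>. Y' j \<omega> \<partial>M))"
  proof -
    have "(\<integral>\<omega>. SY \<omega> \<partial>M) = (\<Sum>j<n. \<integral>\<omega>. Y j \<omega> + Y' j \<omega> \<partial>M)"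
      unfolding SY_def using iY iY' by simp
    also have "\<dots> = (\<Sum>j<n. (\<integral>\<omega>. Y j \<omega> \<partial>M) + (\<integral>\<omega>. Y' j \<omega> \<partial>M))"
      by (rule sum.cong) (use iY iY' in auto)
    finally show ?thesis .
  qed
  have Tsum: "(\<Sum>j<n. \<integral>\<omega>. X j \<omega> + Y j \<omega> + Y' j \<omega> \<partial>M) = (\<integral>\<omega>. SX \<omega> \<partial>M) + (\<integral>\<omega>. SY \<omega> \<partial>M)"
  proof -
    have "(\<Sum>j<n. \<integral>\<omega>. X j \<omega> + Y j \<omega> + Y' j \<omega> \<partial>M)
        = (\<Sum>j<n. (\<integral>\<omega>. X j \<omega> \<partial>M) + ((\<integral>\<omega>. Y j \<omega> \<partial>M) + (\<integral>\<omega>. Y' j \<omega> \<partial>M)))"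
      by (rule sum.cong) (use iX iY iY' in auto)
    then show ?thesis unfolding ESX ESY by (simp add: sum.distrib)
  qed
  define T where "T = (\<integral>\<omega>. SX \<omega> \<partial>M) + (\<integral>\<omega>. SY \<omega> \<partial>M)"
  have big': "(\<Sum>j<n. \<integral>\<omega>. X j \<omega> + Y j \<omega> + Y' j \<omega> \<partial>M) > 1" using big Tsum by simp
  have PI1: "(\<integral>\<omega>. (if SX \<omega> + SY \<omega> = 0 then 0 else X i \<omega> / (SX \<omega> + SY \<omega>)) \<partial>M)
      \<le> (\<integral>\<omega>. X i \<omega> \<partial>M) / (T - 1)"
    and PI2: "(\<integral>\<omega>. (if SX \<omega> + SY \<omega> = 0 then 0 else (Y i \<omega> + Y' i \<omega>) / (SX \<omega> + SY \<omega>)) \<partial>M)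
      \<le> ((\<integral>\<omega>. Y i \<omega> \<partial>M) + (\<integral>\<omega>. Y' i \<omega> \<partial>M)) / (T - 1)" if i: "i < n" for i
    using per_index[OF i bern indep XY0 tp como[OF i] big'] unfolding SX_def SY_def T_def Tsum[symmetric, unfolded SX_def SY_def] by auto
  have L0: "T - 1 > 0" using big T_def by simp
  have SXM[measurable]: "SX \<in> borel_measurable M" unfolding SX_def
    by (rule borel_measurable_sum) (auto intro: XM)
  have SYM[measurable]: "SY \<in> borel_measurable M" unfolding SY_def
    by (rule borel_measurable_sum) (auto intro!: borel_measurable_add YM Y'M)
  have nn: "0 \<le> X j \<omega> \<and> 0 \<le> Y j \<omega> \<and> 0 \<le> Y' j \<omega>" if "j < n" "\<omega> \<in> space M" for j \<omega>
    using bj[OF that] by auto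
  have Xle: "X i \<omega> \<le> SX \<omega> + SY \<omega>" and Yle: "Y i \<omega> + Y' i \<omega> \<le> SX \<omega> + SY \<omega>"
    and SXnn: "0 \<le> SX \<omega>" and SYnn: "0 \<le> SY \<omega>"
    if i: "i < n" and \<omega>: "\<omega> \<in> space M" for i \<omega>
  proof -
    show sx: "0 \<le> SX \<omega>" unfolding SX_def by (rule sum_nonneg) (use nn \<omega> in auto)
    show sy: "0 \<le> SY \<omega>" unfolding SY_def by (rule sum_nonneg) (use nn \<omega> in \<open>auto intro: add_nonneg_nonneg\<close>)
    have "X i \<omega> \<le> SX \<omega>" unfolding SX_def by (rule member_le_sum) (use i nn \<omega> in auto)
    then show "X i \<omega> \<le> SX \<omega> + SY \<omega>" using sy by simp
    have "Y i \<omega> + Y' i \<omega> \<le> SY \<omega>" unfolding SY_def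
      by (rule member_le_sum[where f="\<lambda>j. Y j \<omega> + Y' j \<omega>"]) (use i nn \<omega> in \<open>auto intro: add_nonneg_nonneg\<close>)
    then show "Y i \<omega> + Y' i \<omega> \<le> SX \<omega> + SY \<omega>" using sx by simp
  qed
  have frac1: "\<bar>if s = 0 then 0 else x / s\<bar> \<le> 1" if "0 \<le> x" "x \<le> s" for x s :: real
    using that by (auto simp: abs_of_nonneg divide_le_eq_1)
  have iDX: "integrable M (\<lambda>\<omega>. if SX \<omega> + SY \<omega> = 0 then 0 else X i \<omega> / (SX \<omega> + SY \<omega>))" if i: "i < n" for i
  proof (rule bnd_int[where B=1])
    note XM[OF i, measurable]
    show "(\<lambda>\<omega>. if SX \<omega> + SY \<omega> = 0 then 0 else X i \<omega> / (SX \<omega> + SY \<omega>)) \<in> borel_measurable M" by measurable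
    fix \<omega> assume \<omega>: "\<omega> \<in> space M"
    show "\<bar>if SX \<omega> + SY \<omega> = 0 then 0 else X i \<omega> / (SX \<omega> + SY \<omega>)\<bar> \<le> 1"
      by (rule frac1) (use nn[OF i \<omega>] Xle[OF i \<omega>] in auto)
  qed
  have iDY: "integrable M (\<lambda>\<omega>. if SX \<omega> + SY \<omega> = 0 then 0 else (Y i \<omega> + Y' i \<omega>) / (SX \<omega> + SY \<omega>))" if i: "i < n" for i
  proof (rule bnd_int[where B=1])
    note YM[OF i, measurable] Y'M[OF i, measurable]
    show "(\<lambda>\<omega>. if SX \<omega> + SY \<omega> = 0 then 0 else (Y i \<omega> + Y' i \<omega>) / (SX \<omega> + SY \<omega>)) \<in> borel_measurable M" by measurable
    fix \<omega> assume \<omega>: "\<omega> \<in> space M"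
    show "\<bar>if SX \<omega> + SY \<omega> = 0 then 0 else (Y i \<omega> + Y' i \<omega>) / (SX \<omega> + SY \<omega>)\<bar> \<le> 1"
      by (rule frac1) (use nn[OF i \<omega>] Yle[OF i \<omega>] in auto)
  qed
  have up: "(\<integral>\<omega>. (if SX \<omega> + SY \<omega> = 0 then 0 else SX \<omega> / (SX \<omega> + SY \<omega>)) \<partial>M)
      \<le> (\<integral>\<omega>. SX \<omega> \<partial>M) / (T - 1)"
  proof -
    have "(\<lambda>\<omega>. if SX \<omega> + SY \<omega> = 0 then 0 else SX \<omega> / (SX \<omega> + SY \<omega>))
       = (\<lambda>\<omega>. \<Sum>i<n. if SX \<omega> + SY \<omega> = 0 then 0 else X i \<omega> / (SX \<omega> + SY \<omega>))"
      by (auto simp: fun_eq_iff sum_divide_distrib[symmetric] SX_def)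
    then have "(\<integral>\<omega>. (if SX \<omega> + SY \<omega> = 0 then 0 else SX \<omega> / (SX \<omega> + SY \<omega>)) \<partial>M)
       = (\<Sum>i<n. \<integral>\<omega>. (if SX \<omega> + SY \<omega> = 0 then 0 else X i \<omega> / (SX \<omega> + SY \<omega>)) \<partial>M)"
      using iDX by simp
    also have "\<dots> \<le> (\<Sum>i<n. (\<integral>\<omega>. X i \<omega> \<partial>M) / (T - 1))"
      by (rule sum_mono) (rule PI1, simp)
    also have "\<dots> = (\<integral>\<omega>. SX \<omega> \<partial>M) / (T - 1)" unfolding ESX by (simp add: sum_divide_distrib)
    finally show ?thesis .
  qed
  have upY: "(\<integral>\<omega>. (if SX \<omega> + SY \<omega> = 0 then 0 else SY \<omega> / (SX \<omega> + SY \<omega>)) \<partial>M)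
      \<le> (\<integral>\<omega>. SY \<omega> \<partial>M) / (T - 1)"
  proof -
    have "(\<lambda>\<omega>. if SX \<omega> + SY \<omega> = 0 then 0 else SY \<omega> / (SX \<omega> + SY \<omega>))
       = (\<lambda>\<omega>. \<Sum>i<n. if SX \<omega> + SY \<omega> = 0 then 0 else (Y i \<omega> + Y' i \<omega>) / (SX \<omega> + SY \<omega>))"
      by (auto simp: fun_eq_iff sum_divide_distrib[symmetric] SY_def)
    then have "(\<integral>\<omega>. (if SX \<omega> + SY \<omega> = 0 then 0 else SY \<omega> / (SX \<omega> + SY \<omega>)) \<partial>M)
       = (\<Sum>i<n. \<integral>\<omega>. (if SX \<omega> + SY \<omega> = 0 then 0 else (Y i \<omega> + Y' i \<omega>) / (SX \<omega> + SY \<omega>)) \<partial>M)"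
      using iDY by simp
    also have "\<dots> \<le> (\<Sum>i<n. ((\<integral>\<omega>. Y i \<omega> \<partial>M) + (\<integral>\<omega>. Y' i \<omega> \<partial>M)) / (T - 1))"
      by (rule sum_mono) (rule PI2, simp)
    also have "\<dots> = (\<integral>\<omega>. SY \<omega> \<partial>M) / (T - 1)" unfolding ESY by (simp add: sum_divide_distrib)
    finally show ?thesis .
  qed
  have iDSY: "integrable M (\<lambda>\<omega>. if SX \<omega> + SY \<omega> = 0 then 0 else SY \<omega> / (SX \<omega> + SY \<omega>))"
  proof (rule bnd_int[where B=1])
    fix \<omega> assume \<omega>: "\<omega> \<in> space M"
    show "\<bar>if SX \<omega> + SY \<omega> = 0 then 0 else SY \<omega> / (SX \<omega> + SY \<omega>)\<bar> \<le> 1"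
    proof (rule frac1)
      have a: "0 \<le> SX \<omega>" unfolding SX_def by (rule sum_nonneg) (use nn \<omega> in auto)
      have b: "0 \<le> SY \<omega>" unfolding SY_def by (rule sum_nonneg) (use nn \<omega> in \<open>auto intro: add_nonneg_nonneg\<close>)
      show "0 \<le> SY \<omega>" by (rule b)
      show "SY \<omega> \<le> SX \<omega> + SY \<omega>" using a by simp
    qed
  qed measurable
  have low: "(\<integral>\<omega>. (if SX \<omega> + SY \<omega> = 0 then 1 else SX \<omega> / (SX \<omega> + SY \<omega>)) \<partial>M)
      = 1 - (\<integral>\<omega>. (if SX \<omega> + SY \<omega> = 0 then 0 else SY \<omega> / (SX \<omega> + SY \<omega>)) \<partial>M)"
  proof -
    have "(\<lambda>\<omega>. if SX \<omega> + SY \<omega> = 0 then 1 else SX \<omega> / (SX \<omega> + SY \<omega>))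
        = (\<lambda>\<omega>. 1 - (if SX \<omega> + SY \<omega> = 0 then 0 else SY \<omega> / (SX \<omega> + SY \<omega>)))"
    proof (rule ext)
      fix \<omega>
      show "(if SX \<omega> + SY \<omega> = 0 then 1 else SX \<omega> / (SX \<omega> + SY \<omega>))
        = 1 - (if SX \<omega> + SY \<omega> = 0 then 0 else SY \<omega> / (SX \<omega> + SY \<omega>))"
      proof (cases "SX \<omega> + SY \<omega> = 0")
        case False
        show ?thesis using False by (simp add: field_simps)
      qed simp
    qed
    then show ?thesis using iDSY by (simp add: prob_space)
  qed
  have "((\<integral>\<omega>. SX \<omega> \<partial>M) - 1) / (T - 1) = 1 - (\<integral>\<omega>. SY \<omega> \<partial>M) / (T - 1)"
    using L0 unfolding T_def by (simp add: field_simps)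
  then show ?thesis using up upY low unfolding T_def by simp
qed

end
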